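(* Let $a \in \mathbb{R}\setminus\{0\}$, $m>0$ and $b, p \in \mathbb{R}^{+}$. Define $$\mathcal{F}(1,m,a,b,p) = \int_0^\infty Q_m(a\sqrt{x}, b)\, e^{-px}\,{\rm d}x .$$ Then $$\mathcal{F}(1,m,a,b,p) = \frac{\Gamma\!\left(m,\frac{b^2}{2}\right)}{p\,\Gamma(m)} + \frac{a^2\, e^{-\frac{pb^2}{a^2+2p}}\,\gamma\!\left(m,\frac{a^2b^2}{2a^2+4p}\right)}{p\, a^{2m}\,\Gamma(m)\,(a^2+2p)^{1-m}}.$$
   Context: $Q_m(\alpha,\beta)$ is the generalized Marcum $Q$-function of real order $m>0$, $Q_m(\alpha,\beta) = \alpha^{1-m}\int_\beta^\infty t^{m} e^{-(t^2+\alpha^2)/2} I_{m-1}(\alpha t)\,{\rm d}t$, where $I_{\nu}$ is the modified Bessel function of the first kind. $\Gamma$ is the Euler Gamma function, $\Gamma(s,x)=\int_x^\infty t^{s-1}e^{-t}\,{\rm d}t$ is the upper incomplete gamma function and $\gamma(s,x)=\int_0^x t^{s-1}e^{-t}\,{\rm d}t$ is the lower incomplete gamma function. *)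

theory Defs
  imports "HOL-Analysis.Analysis"
begin

text \<open>Modified Bessel function of the first kind, via its power series
  (used for positive arguments z > 0 and real order nu > -1).\<close>
definition bessel_I :: "real \<Rightarrow> real \<Rightarrow> real" where
  "bessel_I nu z = (\<Sum>k. (z / 2) powr (2 * real k + nu) / (fact k * Gamma (real k + nu + 1)))"

text \<open>Generalized Marcum Q-function of real order m > 0.
  For alpha <> 0 this is alpha^(1-m) * int_beta^inf t^m exp(-(t^2+alpha^2)/2) I_(m-1)(alpha t) dt;
  the integrand is even in alpha, so |alpha| is used (this makes sense of alpha < 0).
  For alpha = 0 the (continuous) limiting value is used.\<close>
definition marcum_Q :: "real \<Rightarrow> real \<Rightarrow> real \<Rightarrow> real" where
  "marcum_Q m \<alpha> \<beta> =
    (if \<alpha> \<noteq> 0 then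
       \<bar>\<alpha>\<bar> powr (1 - m) *
       (LBINT t:{\<beta><..}. t powr m * exp (- (t\<^sup>2 + \<alpha>\<^sup>2) / 2) * bessel_I (m - 1) (\<bar>\<alpha>\<bar> * t))
     else
       (LBINT t:{\<beta><..}. t powr m * exp (- (t\<^sup>2) / 2) * (t / 2) powr (m - 1) / Gamma m))"

definition upper_gamma :: "real \<Rightarrow> real \<Rightarrow> real" where
  "upper_gamma s x = (LBINT t:{x<..}. t powr (s - 1) * exp (- t))"

definition lower_gamma :: "real \<Rightarrow> real \<Rightarrow> real" where
  "lower_gamma s x = (LBINT t:{0<..<x}. t powr (s - 1) * exp (- t))"

end

theory Submission
  imports Defs
begin

lemma beta_nn:
  fixes \<sigma> z :: real and n :: nat
  assumes "\<sigma> > 0" "z > 0"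
  shows "(\<integral>\<^sup>+t. ennreal (indicator {0<..<z} t * (t powr (\<sigma> - 1) * (z - t) ^ n)) \<partial>lborel)
       = ennreal (z powr (\<sigma> + n) * Beta \<sigma> (n + 1))"
proof -
  have "((\<lambda>u. u powr (\<sigma> - 1) * (1 - u) powr (real (n+1) - 1)) has_integral Beta \<sigma> (n+1)) {0<..<1}"
    using has_integral_Beta_real[of \<sigma> "real (n+1)"] assms by (simp add: has_integral_Icc_iff_Ioo)
  hence "((\<lambda>u. u powr (\<sigma> - 1) * (1 - u) ^ n) has_integral Beta \<sigma> (n+1)) {0<..<1}"
    by (rule has_integral_spike_finite[of "{}", rotated 2]) (auto simp: powr_realpow)
  from nn_integral_has_integral_lebesgue[OF _ this]
  have B: "(\<integral>\<^sup>+u. ennreal (indicator {0<..<1} u * (u powr (\<sigma> - 1) * (1 - u) ^ n)) \<partial>lborel) = ennreal (Beta \<sigma> (n+1))"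
    by simp
  have "(\<integral>\<^sup>+t. ennreal (indicator {0<..<z} t * (t powr (\<sigma> - 1) * (z - t) ^ n)) \<partial>lborel)
      = ennreal \<bar>z\<bar> * (\<integral>\<^sup>+u. ennreal (indicator {0<..<z} (0 + z * u) * ((0 + z * u) powr (\<sigma> - 1) * (z - (0 + z*u)) ^ n)) \<partial>lborel)"
    using assms by (subst nn_integral_real_affine[of _ z 0]) auto
  also have "\<dots> = ennreal z * (\<integral>\<^sup>+u. ennreal (z powr (\<sigma> - 1) * z ^ n) * ennreal (indicator {0<..<1} u * (u powr (\<sigma> - 1) * (1 - u) ^ n)) \<partial>lborel)"
  proof -
    have "ennreal (indicator {0<..<z} (0 + z * u) * ((0 + z * u) powr (\<sigma> - 1) * (z - (0 + z*u)) ^ n)) =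
          ennreal (z powr (\<sigma> - 1) * z ^ n) * ennreal (indicator {0<..<1} u * (u powr (\<sigma> - 1) * (1 - u) ^ n))" for u
    proof (cases "0 < u \<and> u < 1")
      case True
      have "(z * u) powr (\<sigma> - 1) * (z - z * u) ^ n = (z powr (\<sigma> - 1) * z ^ n) * (u powr (\<sigma> - 1) * (1 - u) ^ n)"
        using True assms by (simp add: powr_mult power_mult_distrib[symmetric] right_diff_distrib)
      moreover have "z * u \<in> {0<..<z}" using True assms by auto
      ultimately show ?thesis using True assms
        by (simp add: ennreal_mult'[symmetric])
    next
      case False
      hence "z * u \<notin> {0<..<z}" using assms
        by (auto simp: mult_less_cancel_left1 zero_less_mult_iff)
      thus ?thesis using False by (auto simp: indicator_def)
    qed
    thus ?thesis using assms by simp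
  qed
  also have "\<dots> = ennreal z * (ennreal (z powr (\<sigma> - 1) * z ^ n) * ennreal (Beta \<sigma> (n+1)))"
    by (subst nn_integral_cmult) (auto simp: B)
  also have "\<dots> = ennreal (z powr (\<sigma> + n) * Beta \<sigma> (n + 1))"
  proof -
    have "Beta \<sigma> (n+1) \<ge> 0" using assms by (simp add: Beta_def Gamma_real_pos less_imp_le)
    moreover have "z * (z powr (\<sigma> - 1) * z ^ n) = z powr (\<sigma> + n)"
      using assms by (simp add: powr_add powr_diff powr_realpow)
    ultimately show ?thesis using assms
      by (simp add: ennreal_mult'[symmetric] mult.assoc)
  qed
  finally show ?thesis .
qed

lemma nn_to_sums:
  fixes f :: "nat \<Rightarrow> real"
  assumes f0: "\<And>n. f n \<ge> 0" and S: "(\<Sum>n. ennreal (f n)) = ennreal v" and v: "v \<ge> 0"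
  shows "f sums v"
proof -
  have sf: "summable f" by (rule summable_suminf_not_top) (use f0 S in simp_all)
  have "ennreal (suminf f) = ennreal v" using S suminf_ennreal2[of f, OF f0 sf] by simp
  hence "suminf f = v" using v sf f0 by (simp add: suminf_nonneg)
  thus ?thesis using sf summable_sums by blast
qed

lemma lower_nn:
  fixes \<sigma> z :: real
  assumes "\<sigma> > 0" "z > 0"
  shows "(\<integral>\<^sup>+t. ennreal (indicator {0<..<z} t * (t powr (\<sigma> - 1) * exp (- t))) \<partial>lborel)
       = (\<Sum>n. ennreal (exp (- z) * Gamma \<sigma> * z powr (\<sigma> + n) / Gamma (\<sigma> + n + 1)))"
proof -
  let ?A = "\<lambda>n t. indicator {0<..<z} t * (t powr (\<sigma> - 1) * (z - t) ^ n)"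
  have A_nn: "?A n t \<ge> 0" for n t by (simp add: indicator_def)
  have pt: "ennreal (indicator {0<..<z} t * (t powr (\<sigma> - 1) * exp (- t))) =
        (\<Sum>n. ennreal (?A n t) * ennreal (exp (- z) / fact n))" for t
  proof -
    have "(\<lambda>n. (z - t) ^ n /\<^sub>R fact n) sums exp (z - t)" by (rule exp_converges)
    hence "(\<lambda>n. indicator {0<..<z} t * t powr (\<sigma> - 1) * exp (- z) * ((z - t) ^ n /\<^sub>R fact n)) sums
           (indicator {0<..<z} t * t powr (\<sigma> - 1) * exp (- z) * exp (z - t))"
      by (rule sums_mult)
    moreover have "exp (- z) * exp (z - t) = exp (- t)"
      by (simp add: exp_add[symmetric])
    moreover have "indicator {0<..<z} t * t powr (\<sigma> - 1) * exp (- z) * ((z - t) ^ n /\<^sub>R fact n) = ?A n t * (exp (- z) / fact n)" for n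
      by (simp add: divide_inverse)
    ultimately have "(\<lambda>n. ?A n t * (exp (- z) / fact n)) sums (indicator {0<..<z} t * (t powr (\<sigma> - 1) * exp (- t)))"
      by (simp add: mult.assoc)
    hence "(\<Sum>n. ennreal (?A n t * (exp (- z) / fact n))) = ennreal (indicator {0<..<z} t * (t powr (\<sigma> - 1) * exp (- t)))"
      by (rule suminf_ennreal_eq[rotated]) (simp add: A_nn)
    moreover have "ennreal (?A n t * (exp (- z) / fact n)) = ennreal (?A n t) * ennreal (exp (- z) / fact n)" for n
      by (rule ennreal_mult) (simp_all add: A_nn)
    ultimately show ?thesis by simp
  qed
  have "(\<integral>\<^sup>+t. ennreal (indicator {0<..<z} t * (t powr (\<sigma> - 1) * exp (- t))) \<partial>lborel)
      = (\<integral>\<^sup>+t. (\<Sum>n. ennreal (?A n t) * ennreal (exp (- z) / fact n)) \<partial>lborel)"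
    by (simp only: pt)
  also have "\<dots> = (\<Sum>n. \<integral>\<^sup>+t. ennreal (?A n t) * ennreal (exp (- z) / fact n) \<partial>lborel)"
    by (rule nn_integral_suminf) simp
  also have "\<dots> = (\<Sum>n. ennreal (z powr (\<sigma> + n) * Beta \<sigma> (n + 1)) * ennreal (exp (- z) / fact n))"
    by (subst nn_integral_multc) (simp_all add: beta_nn assms)
  also have "\<dots> = (\<Sum>n. ennreal (exp (- z) * Gamma \<sigma> * z powr (\<sigma> + n) / Gamma (\<sigma> + n + 1)))"
  proof (rule suminf_cong)
    fix n :: nat
    have g: "Gamma (1 + real n) = fact n" by (rule Gamma_fact)
    have e: "\<sigma> + (1 + real n) = \<sigma> + (real n + 1)" by simp
    have "Beta \<sigma> (n + 1) \<ge> 0" using assms by (simp add: Beta_def Gamma_real_pos less_imp_le)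
    moreover have "z powr (\<sigma> + n) * Beta \<sigma> (n + 1) * (exp (- z) / fact n) = exp (- z) * Gamma \<sigma> * z powr (\<sigma> + n) / Gamma (\<sigma> + n + 1)"
      by (simp add: Beta_def g e add.assoc)
    ultimately show "ennreal (z powr (\<sigma> + n) * Beta \<sigma> (n + 1)) * ennreal (exp (- z) / fact n) = ennreal (exp (- z) * Gamma \<sigma> * z powr (\<sigma> + n) / Gamma (\<sigma> + n + 1))"
      by (subst ennreal_mult[symmetric]) simp_all
  qed
  finally show ?thesis .
qed

lemma set_integral_nn:
  fixes f :: "real \<Rightarrow> real"
  assumes "f \<in> borel_measurable borel" "A \<in> sets borel" "\<And>x. x \<in> A \<Longrightarrow> 0 \<le> f x"
  shows "(LBINT x:A. f x) = enn2real (\<integral>\<^sup>+x. ennreal (indicator A x * f x) \<partial>lborel)"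
  unfolding set_lebesgue_integral_def
  using assms by (subst integral_eq_nn_integral) (auto simp: indicator_def)

lemma lower_gamma_sums:
  fixes \<sigma> z :: real
  assumes "\<sigma> > 0" "z > 0"
  shows "(\<lambda>n. exp (- z) * Gamma \<sigma> * z powr (\<sigma> + n) / Gamma (\<sigma> + n + 1)) sums lower_gamma \<sigma> z"
    and "(\<integral>\<^sup>+t. ennreal (indicator {0<..<z} t * (t powr (\<sigma> - 1) * exp (- t))) \<partial>lborel) = ennreal (lower_gamma \<sigma> z)"
proof -
  let ?e = "\<lambda>n::nat. exp (- z) * Gamma \<sigma> * z powr (\<sigma> + n) / Gamma (\<sigma> + n + 1)"
  have e0: "?e n \<ge> 0" for n using assms by (simp add: Gamma_real_pos less_imp_le)
  have "(\<integral>\<^sup>+t. ennreal (indicator {0<..<z} t * (t powr (\<sigma> - 1) * exp (- t))) \<partial>lborel)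
     \<le> (\<integral>\<^sup>+t. ennreal (indicator {0..} t * t powr (\<sigma> - 1) / exp t) \<partial>lborel)"
    by (intro nn_integral_mono ennreal_leI) (auto simp: indicator_def exp_minus divide_inverse)
  also have "\<dots> = ennreal (Gamma \<sigma>)" using Gamma_conv_nn_integral_real[OF assms(1)] by simp
  finally have le: "(\<Sum>n. ennreal (?e n)) \<le> ennreal (Gamma \<sigma>)" using lower_nn[OF assms] by simp
  have sm: "summable ?e"
    by (rule summable_suminf_not_top) (use e0 le in \<open>auto simp: top_unique\<close>)
  have nn: "(\<integral>\<^sup>+t. ennreal (indicator {0<..<z} t * (t powr (\<sigma> - 1) * exp (- t))) \<partial>lborel) = ennreal (suminf ?e)"
    using lower_nn[OF assms] suminf_ennreal2[OF e0 sm] by simp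
  have "lower_gamma \<sigma> z = suminf ?e"
    unfolding lower_gamma_def
    by (subst set_integral_nn) (simp_all add: nn suminf_nonneg[OF sm e0])
  thus "?e sums lower_gamma \<sigma> z" using sm summable_sums by simp
  show "(\<integral>\<^sup>+t. ennreal (indicator {0<..<z} t * (t powr (\<sigma> - 1) * exp (- t))) \<partial>lborel) = ennreal (lower_gamma \<sigma> z)"
    using nn \<open>lower_gamma \<sigma> z = suminf ?e\<close> by simp
qed

lemma upper_gamma_eq:
  fixes \<sigma> y :: real
  assumes "\<sigma> > 0" "y > 0"
  shows "(\<integral>\<^sup>+t. ennreal (indicator {y<..} t * (t powr (\<sigma> - 1) * exp (- t))) \<partial>lborel) = ennreal (upper_gamma \<sigma> y)"
    and "upper_gamma \<sigma> y = Gamma \<sigma> - lower_gamma \<sigma> y"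
proof -
  let ?f = "\<lambda>t::real. t powr (\<sigma> - 1) * exp (- t)"
  let ?I = "(\<integral>\<^sup>+t. ennreal (indicator {y<..} t * ?f t) \<partial>lborel)"
  have "ennreal (Gamma \<sigma>) = (\<integral>\<^sup>+t. ennreal (indicator {0..} t * t powr (\<sigma> - 1) / exp t) \<partial>lborel)"
    using Gamma_conv_nn_integral_real[OF assms(1)] by simp
  also have "\<dots> = (\<integral>\<^sup>+t. ennreal (indicator {0<..<y} t * ?f t) + ennreal (indicator {y<..} t * ?f t) \<partial>lborel)"
  proof (rule nn_integral_cong_AE)
    have "AE t in lborel. t \<noteq> 0" "AE t in lborel. t \<noteq> y" by (rule AE_lborel_singleton)+
    thus "AE t in lborel. ennreal (indicator {0..} t * t powr (\<sigma> - 1) / exp t) = ennreal (indicator {0<..<y} t * ?f t) + ennreal (indicator {y<..} t * ?f t)"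
    proof eventually_elim
      case (elim t)
      show ?case using elim assms by (cases "t < y") (auto simp: indicator_def exp_minus divide_inverse)
    qed
  qed
  also have "\<dots> = ennreal (lower_gamma \<sigma> y) + ?I"
    by (subst nn_integral_add) (simp_all add: lower_gamma_sums(2)[OF assms])
  finally have eq: "ennreal (Gamma \<sigma>) = ennreal (lower_gamma \<sigma> y) + ?I" .
  hence "?I \<noteq> top" by (metis ennreal_add_eq_top ennreal_neq_top)
  then obtain r where r: "?I = ennreal r" "r \<ge> 0" by (cases ?I) auto
  have L0: "lower_gamma \<sigma> y \<ge> 0"
    by (rule sums_le[OF _ sums_zero lower_gamma_sums(1)[OF assms]]) (use assms in \<open>simp add: Gamma_real_pos less_imp_le\<close>)
  have "Gamma \<sigma> = lower_gamma \<sigma> y + r"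
    using eq r L0 Gamma_real_pos[OF assms(1)] by (simp add: ennreal_plus[symmetric] del: ennreal_plus)
  moreover have "upper_gamma \<sigma> y = r"
    unfolding upper_gamma_def by (subst set_integral_nn) (use assms r in simp_all)
  ultimately show "?I = ennreal (upper_gamma \<sigma> y)" "upper_gamma \<sigma> y = Gamma \<sigma> - lower_gamma \<sigma> y"
    using r by simp_all
qed

lemma subst_sq:
  fixes \<phi> :: "real \<Rightarrow> real" and b :: real
  assumes [measurable]: "\<phi> \<in> borel_measurable borel" and \<phi>0: "\<And>w. 0 \<le> \<phi> w" and b: "b \<ge> 0"
  shows "(\<integral>\<^sup>+t. ennreal (indicator {b<..} t * (\<phi> (t\<^sup>2 / 2) * t)) \<partial>lborel)
       = (\<integral>\<^sup>+w. ennreal (indicator {b\<^sup>2 / 2<..} w * \<phi> w) \<partial>lborel)"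
proof -
  let ?g = "\<lambda>t::real. t\<^sup>2 / 2"
  let ?P = "\<lambda>n::nat. \<integral>\<^sup>+w. ennreal (\<phi> w * indicator {?g b..?g (b + real n)} w) \<partial>lborel"
  let ?Q = "\<lambda>n::nat. \<integral>\<^sup>+t. ennreal (\<phi> (?g t) * t * indicator {b..b + real n} t) \<partial>lborel"
  have PQ: "?P n = ?Q n" for n
    by (rule nn_integral_substitution) (use b in \<open>auto simp: set_borel_measurable_def intro!: derivative_eq_intros continuous_intros\<close>)
  have Q: "?Q \<longlonglongrightarrow> (\<integral>\<^sup>+t. ennreal (\<phi> (?g t) * t * indicator {b..} t) \<partial>lborel)"
  proof (rule nn_integral_LIMSEQ)
    show "incseq (\<lambda>n t. ennreal (\<phi> (?g t) * t * indicator {b..b + real n} t))"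
      unfolding incseq_def le_fun_def
      using b \<phi>0 by (auto intro!: ennreal_leI simp: indicator_def)
    fix t :: real
    show "(\<lambda>n. ennreal (\<phi> (?g t) * t * indicator {b..b + real n} t)) \<longlonglongrightarrow> ennreal (\<phi> (?g t) * t * indicator {b..} t)"
    proof (rule tendsto_eventually, rule eventually_sequentiallyI[of "nat \<lceil>t\<rceil>"])
      fix n assume "nat \<lceil>t\<rceil> \<le> n"
      hence "t \<le> b + real n" using b by linarith
      thus "ennreal (\<phi> (?g t) * t * indicator {b..b + real n} t) = ennreal (\<phi> (?g t) * t * indicator {b..} t)"
        by (auto simp: indicator_def)
    qed
  qed simp
  have P: "?P \<longlonglongrightarrow> (\<integral>\<^sup>+w. ennreal (\<phi> w * indicator {?g b..} w) \<partial>lborel)"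
  proof (rule nn_integral_LIMSEQ)
    show "incseq (\<lambda>n w. ennreal (\<phi> w * indicator {?g b..?g (b + real n)} w))"
      unfolding incseq_def le_fun_def
    proof (intro allI impI ennreal_leI mult_left_mono)
      fix m n :: nat and w :: real assume "m \<le> n"
      hence "(b + real m)\<^sup>2 \<le> (b + real n)\<^sup>2" using b by (intro power_mono) auto
      thus "indicator {?g b..?g (b + real m)} w \<le> (indicator {?g b..?g (b + real n)} w :: real)"
        by (auto simp: indicator_def)
    qed (use \<phi>0 in auto)
    fix w :: real
    show "(\<lambda>n. ennreal (\<phi> w * indicator {?g b..?g (b + real n)} w)) \<longlonglongrightarrow> ennreal (\<phi> w * indicator {?g b..} w)"
    proof (rule tendsto_eventually, rule eventually_sequentiallyI[of "nat \<lceil>2 * w\<rceil> + 1"])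
      fix n assume n: "nat \<lceil>2 * w\<rceil> + 1 \<le> n"
      hence "2 * w \<le> real n" "1 \<le> real n" by linarith+
      moreover have "real n \<le> (real n)\<^sup>2" using \<open>1 \<le> real n\<close> by (simp add: power2_eq_square)
      moreover have "(real n)\<^sup>2 \<le> (b + real n)\<^sup>2" using b by (intro power_mono) auto
      ultimately have "w \<le> ?g (b + real n)" by linarith
      thus "ennreal (\<phi> w * indicator {?g b..?g (b + real n)} w) = ennreal (\<phi> w * indicator {?g b..} w)"
        by (auto simp: indicator_def)
    qed
  qed simp
  have eq: "(\<integral>\<^sup>+t. ennreal (\<phi> (?g t) * t * indicator {b..} t) \<partial>lborel) = (\<integral>\<^sup>+w. ennreal (\<phi> w * indicator {?g b..} w) \<partial>lborel)"
    using LIMSEQ_unique[OF Q] P PQ by simp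
  have "(\<integral>\<^sup>+t. ennreal (indicator {b<..} t * (\<phi> (t\<^sup>2 / 2) * t)) \<partial>lborel) = (\<integral>\<^sup>+t. ennreal (\<phi> (?g t) * t * indicator {b..} t) \<partial>lborel)"
    by (rule nn_integral_cong_AE, rule eventually_mono[OF AE_lborel_singleton[of b]]) (auto simp: indicator_def)
  also note eq
  also have "(\<integral>\<^sup>+w. ennreal (\<phi> w * indicator {?g b..} w) \<partial>lborel) = (\<integral>\<^sup>+w. ennreal (indicator {b\<^sup>2 / 2<..} w * \<phi> w) \<partial>lborel)"
    by (rule nn_integral_cong_AE, rule eventually_mono[OF AE_lborel_singleton[of "?g b"]]) (auto simp: indicator_def)
  finally show ?thesis .
qed

lemma Gamma_Suc_shift:
  fixes m :: real assumes "m > 0"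
  shows "Gamma (real (Suc k) + m) = (real k + m) * Gamma (real k + m)"
proof -
  have "real k + m \<notin> \<int>\<^sub>\<le>\<^sub>0" using assms nonpos_Ints_nonpos[of "real k + m"] by auto
  from Gamma_plus1[OF this] show ?thesis by (simp add: add_ac)
qed

lemma bessel_sums:
  fixes m z :: real
  assumes m: "m > 0" and z: "z > 0"
  shows "(\<lambda>k. (z/2) powr (m - 1) * ((z/2)\<^sup>2) ^ k / (fact k * Gamma (real k + m))) sums bessel_I (m - 1) z"
proof -
  let ?f = "\<lambda>k. (z/2) powr (m - 1) * ((z/2)\<^sup>2) ^ k / (fact k * Gamma (real k + m))"
  let ?u = "(z/2)\<^sup>2"
  have Gp: "Gamma (real k + m) > 0" for k using m by (intro Gamma_real_pos) auto
  have f0: "?f k > 0" for k using z Gp[of k] by (simp)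
  have eqf: "(z / 2) powr (2 * real k + (m - 1)) / (fact k * Gamma (real k + (m - 1) + 1)) = ?f k" for k
  proof -
    have "(z / 2) powr (2 * real k + (m - 1)) = (z/2) powr (m - 1) * (z/2) powr (real (2 * k))"
      by (simp add: powr_add)
    also have "(z/2) powr (real (2 * k)) = ((z/2)\<^sup>2) ^ k"
      using z by (subst powr_realpow) (simp_all add: power_mult)
    finally show ?thesis by (simp add: add_ac)
  qed
  have "summable ?f"
  proof (rule summable_ratio_test[of "1/2" "nat \<lceil>2 * ?u\<rceil> + 1"])
    fix n assume n: "nat \<lceil>2 * ?u\<rceil> + 1 \<le> n"
    hence n1: "2 * ?u \<le> real n" "1 \<le> real n" by linarith+
    have g: "Gamma (real (Suc n) + m) = (real n + m) * Gamma (real n + m)" by (rule Gamma_Suc_shift[OF m])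
    have "?f (Suc n) = (z/2) powr (m - 1) * (?u ^ n * ?u) / (fact (Suc n) * ((real n + m) * Gamma (real n + m)))"
      by (simp only: g power_Suc2)
    also have "\<dots> = ?f n * (?u / ((real n + 1) * (real n + m)))"
      using Gp[of n] m by (simp add: field_simps)
    also have "?u / ((real n + 1) * (real n + m)) \<le> 1/2"
    proof -
      have "1 * 1 \<le> real n * real n" using n1 by (intro mult_mono) auto
      moreover have "0 \<le> m * real n" using m by simp
      moreover have "(real n + 1) * (real n + m) = real n * real n + m * real n + real n + m" by (simp add: algebra_simps)
      ultimately have "real n + 1 \<le> (real n + 1) * (real n + m)" using n1 m by linarith
      hence le: "?u \<le> 1/2 * ((real n + 1) * (real n + m))" using n1 by linarith
      have P: "(real n + 1) * (real n + m) > 0" using m by simp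
      show ?thesis by (subst pos_divide_le_eq[OF P]) (use le in linarith)
    qed
    hence "?f n * (?u / ((real n + 1) * (real n + m))) \<le> ?f n * (1/2)"
      using f0[of n] by (intro mult_left_mono) auto
    finally have X: "?f (Suc n) \<le> ?f n * (1/2)" .
    show "norm (?f (Suc n)) \<le> 1/2 * norm (?f n)"
      unfolding real_norm_def abs_of_pos[OF f0] using X by (simp only: mult.commute)
  qed simp
  hence "?f sums suminf ?f" by (rule summable_sums)
  moreover have "bessel_I (m - 1) z = suminf ?f" unfolding bessel_I_def by (simp only: eqf)
  ultimately show ?thesis by simp
qed

lemma marcum_term:
  fixes m r t :: real and k :: nat
  assumes m: "m > 0" and r: "r > 0" and t: "t > 0"
  shows "t powr m * exp (- (t\<^sup>2 + r\<^sup>2) / 2) * ((r * t / 2) powr (m - 1) * ((r * t / 2)\<^sup>2) ^ k / (fact k * Gamma (real k + m)))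
      = (exp (- r\<^sup>2 / 2) * (r\<^sup>2 / 2) ^ k / fact k * r powr (m - 1)) *
        (((t\<^sup>2 / 2) powr (real k + m - 1) * exp (- (t\<^sup>2 / 2)) / Gamma (real k + m)) * t)"
    (is "?L = ?R")
proof -
  have G: "Gamma (real k + m) > 0" using m by (intro Gamma_real_pos) auto
  have f: "fact k > (0::real)" by simp
  have L0: "?L > 0" using m r t G by simp
  have R0: "?R > 0" using m r t G by simp
  have "ln ?L = ln ?R"
    using m r t G f
    by (simp add: ln_mult ln_div ln_realpow algebra_simps) (simp add: field_simps)
  thus ?thesis using L0 R0 by simp
qed

lemma lower_gamma_nonneg:
  assumes "\<sigma> > 0" "z > 0" shows "lower_gamma \<sigma> z \<ge> 0"
  by (rule sums_le[OF _ sums_zero lower_gamma_sums(1)[OF assms]]) (use assms in \<open>simp add: Gamma_real_pos less_imp_le\<close>)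

lemma upper_gamma_bounds:
  assumes "\<sigma> > 0" "y > 0" shows "0 \<le> upper_gamma \<sigma> y" "upper_gamma \<sigma> y \<le> Gamma \<sigma>"
proof -
  show "0 \<le> upper_gamma \<sigma> y"
    unfolding upper_gamma_def by (subst set_integral_nn) (simp_all add: enn2real_nonneg)
  show "upper_gamma \<sigma> y \<le> Gamma \<sigma>"
    using upper_gamma_eq(2)[OF assms] lower_gamma_nonneg[OF assms] by simp
qed

lemma marcum_series:
  fixes m \<alpha> b :: real
  assumes \<alpha>: "\<alpha> \<noteq> 0" and m: "m > 0" and b: "b > 0"
  shows "(\<lambda>k. exp (- \<alpha>\<^sup>2 / 2) * (\<alpha>\<^sup>2 / 2) ^ k / fact k * (upper_gamma (real k + m) (b\<^sup>2 / 2) / Gamma (real k + m)))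
           sums marcum_Q m \<alpha> b"
proof -
  define r where "r = \<bar>\<alpha>\<bar>"
  have r: "r > 0" using \<alpha> by (simp add: r_def)
  have ar: "\<alpha>\<^sup>2 = r\<^sup>2" by (simp add: r_def)
  define y where "y = b\<^sup>2 / 2"
  have y: "y > 0" using b by (simp add: y_def)
  define C where "C k = exp (- r\<^sup>2 / 2) * (r\<^sup>2 / 2) ^ k / fact k * r powr (m - 1)" for k :: nat
  define \<phi> where "\<phi> k w = w powr (real k + m - 1) * exp (- w) / Gamma (real k + m)" for k :: nat and w :: real
  define U where "U k = upper_gamma (real k + m) y / Gamma (real k + m)" for k :: nat
  define h where "h t = t powr m * exp (- (t\<^sup>2 + \<alpha>\<^sup>2) / 2) * bessel_I (m - 1) (r * t)" for t :: real
  have C0: "C k \<ge> 0" for k using r by (simp add: C_def)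
  have \<phi>0: "\<phi> k w \<ge> 0" for k w using m by (simp add: \<phi>_def Gamma_real_pos less_imp_le)
  have Gp: "Gamma (real k + m) > 0" for k using m by (intro Gamma_real_pos) auto
  have U01: "0 \<le> U k" "U k \<le> 1" for k
    using upper_gamma_bounds[of "real k + m" y] m y Gp[of k] by (auto simp: U_def)
  have S1: "(\<lambda>k. C k * (\<phi> k (t\<^sup>2 / 2) * t)) sums h t" if t: "t > 0" for t
  proof -
    have "(\<lambda>k. t powr m * exp (- (t\<^sup>2 + r\<^sup>2) / 2) * ((r * t / 2) powr (m - 1) * ((r * t / 2)\<^sup>2) ^ k / (fact k * Gamma (real k + m))))
          sums (t powr m * exp (- (t\<^sup>2 + r\<^sup>2) / 2) * bessel_I (m - 1) (r * t))"
      by (rule sums_mult, rule bessel_sums) (use m r t in auto)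
    moreover have eq: "(\<lambda>k. t powr m * exp (- (t\<^sup>2 + r\<^sup>2) / 2) * ((r * t / 2) powr (m - 1) * ((r * t / 2)\<^sup>2) ^ k / (fact k * Gamma (real k + m))))
       = (\<lambda>k. C k * (\<phi> k (t\<^sup>2 / 2) * t))"
      unfolding C_def \<phi>_def using marcum_term[OF m r t] by (intro ext)
    ultimately show ?thesis unfolding h_def ar by simp
  qed
  have S2: "ennreal (indicator {b<..} t * h t) = (\<Sum>k. ennreal (indicator {b<..} t * (C k * (\<phi> k (t\<^sup>2 / 2) * t))))" for t
  proof (cases "t > b")
    case True
    hence "t > 0" using b by simp
    have "(\<Sum>k. ennreal (indicator {b<..} t * (C k * (\<phi> k (t\<^sup>2 / 2) * t)))) = ennreal (indicator {b<..} t * h t)"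
      by (rule suminf_ennreal_eq) (use True S1[OF \<open>t > 0\<close>] C0 \<phi>0 \<open>t > 0\<close> in auto)
    thus ?thesis by simp
  qed simp
  have S3: "(\<integral>\<^sup>+t. ennreal (indicator {b<..} t * h t) \<partial>lborel) = (\<Sum>k. ennreal (C k * U k))"
  proof -
    have "(\<integral>\<^sup>+t. ennreal (indicator {b<..} t * h t) \<partial>lborel)
        = (\<Sum>k. \<integral>\<^sup>+t. ennreal (indicator {b<..} t * (C k * (\<phi> k (t\<^sup>2 / 2) * t))) \<partial>lborel)"
      unfolding S2 by (rule nn_integral_suminf) (simp add: \<phi>_def)
    also have "\<dots> = (\<Sum>k. ennreal (C k * U k))"
    proof (rule suminf_cong)
      fix k
      have "(\<integral>\<^sup>+t. ennreal (indicator {b<..} t * (C k * (\<phi> k (t\<^sup>2 / 2) * t))) \<partial>lborel)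
          = (\<integral>\<^sup>+t. ennreal (C k) * ennreal (indicator {b<..} t * (\<phi> k (t\<^sup>2 / 2) * t)) \<partial>lborel)"
      proof (rule nn_integral_cong)
        fix t :: real
        show "ennreal (indicator {b<..} t * (C k * (\<phi> k (t\<^sup>2 / 2) * t))) = ennreal (C k) * ennreal (indicator {b<..} t * (\<phi> k (t\<^sup>2 / 2) * t))"
        proof (cases "t > b")
          case True
          hence "t > 0" using b by simp
          thus ?thesis using True C0[of k] \<phi>0[of k "t\<^sup>2/2"] by (simp add: ennreal_mult[symmetric] mult_ac)
        qed simp
      qed
      also have "\<dots> = ennreal (C k) * (\<integral>\<^sup>+t. ennreal (indicator {b<..} t * (\<phi> k (t\<^sup>2 / 2) * t)) \<partial>lborel)"
        by (rule nn_integral_cmult) (simp add: \<phi>_def)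
      also have "(\<integral>\<^sup>+t. ennreal (indicator {b<..} t * (\<phi> k (t\<^sup>2 / 2) * t)) \<partial>lborel)
               = (\<integral>\<^sup>+w. ennreal (indicator {b\<^sup>2 / 2<..} w * \<phi> k w) \<partial>lborel)"
        by (rule subst_sq) (use b \<phi>0 in \<open>simp_all add: \<phi>_def\<close>)
      also have "\<dots> = (\<integral>\<^sup>+w. ennreal (indicator {y<..} w * (w powr (real k + m - 1) * exp (- w))) * ennreal (1 / Gamma (real k + m)) \<partial>lborel)"
        by (rule nn_integral_cong) (simp add: ennreal_mult[symmetric] \<phi>_def y_def Gp less_imp_le)
      also have "\<dots> = ennreal (upper_gamma (real k + m) y) * ennreal (1 / Gamma (real k + m))"
        using upper_gamma_eq(1)[of "real k + m" y] m y
        by (subst nn_integral_multc) (simp_all add: algebra_simps)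
      also have "ennreal (C k) * \<dots> = ennreal (C k * U k)"
        using upper_gamma_bounds[of "real k + m" y] m y C0[of k] Gp[of k]
        by (simp add: U_def ennreal_mult[symmetric] divide_inverse mult.assoc)
      finally show "(\<integral>\<^sup>+t. ennreal (indicator {b<..} t * (C k * (\<phi> k (t\<^sup>2 / 2) * t))) \<partial>lborel) = ennreal (C k * U k)" .
    qed
    finally show ?thesis .
  qed
  have sC: "summable C"
  proof -
    have "summable (\<lambda>n. inverse (fact n) *\<^sub>R (r\<^sup>2 / 2) ^ n)" by (rule summable_exp_generic)
    moreover have "inverse (fact n) *\<^sub>R (r\<^sup>2 / 2) ^ n = (r\<^sup>2 / 2) ^ n / fact n" for n :: nat
      by (simp add: field_simps)
    ultimately have "summable (\<lambda>k. (r\<^sup>2 / 2) ^ k / fact k)" by simp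
    hence "summable (\<lambda>k. exp (- r\<^sup>2 / 2) * r powr (m - 1) * ((r\<^sup>2 / 2) ^ k / fact k))"
      by (rule summable_mult)
    thus ?thesis unfolding C_def by (simp add: mult_ac)
  qed
  have sCU: "summable (\<lambda>k. C k * U k)"
  proof (rule summable_comparison_test'[OF sC, of 0])
    fix k :: nat
    have "C k * U k \<le> C k * 1" by (rule mult_left_mono) (use C0 U01 in auto)
    thus "norm (C k * U k) \<le> C k" using C0[of k] U01[of k] by simp
  qed
  have hm: "h \<in> borel_measurable borel" unfolding h_def bessel_I_def by measurable
  have h0: "0 \<le> h t" if "t \<in> {b<..}" for t
  proof -
    have "t > 0" using that b by simp
    show ?thesis
      by (rule sums_le[OF _ sums_zero S1[OF \<open>t > 0\<close>]]) (use C0 \<phi>0 \<open>t > 0\<close> in simp)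
  qed
  have "(LBINT t:{b<..}. h t) = suminf (\<lambda>k. C k * U k)"
    by (subst set_integral_nn[OF hm _ h0]) (simp_all add: S3 suminf_ennreal2 sCU C0 U01 suminf_nonneg)
  hence MQ: "marcum_Q m \<alpha> b = r powr (1 - m) * suminf (\<lambda>k. C k * U k)"
    unfolding marcum_Q_def using \<alpha> by (simp add: h_def r_def)
  have "(\<lambda>k. r powr (1 - m) * (C k * U k)) sums (r powr (1 - m) * suminf (\<lambda>k. C k * U k))"
    by (rule sums_mult, rule summable_sums, rule sCU)
  moreover have "r powr (1 - m) * (C k * U k) = exp (- \<alpha>\<^sup>2 / 2) * (\<alpha>\<^sup>2 / 2) ^ k / fact k * (upper_gamma (real k + m) (b\<^sup>2 / 2) / Gamma (real k + m))" for k
  proof -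
    have e: "r powr (1 - m) * r powr (m - 1) = 1" using r by (simp add: powr_add[symmetric])
    have "r powr (1 - m) * (C k * U k) = (r powr (1 - m) * r powr (m - 1)) *
        (exp (- r\<^sup>2 / 2) * (r\<^sup>2 / 2) ^ k / fact k * (upper_gamma (real k + m) y / Gamma (real k + m)))"
      unfolding C_def U_def by (simp only: mult_ac times_divide_eq_left times_divide_eq_right)
    thus ?thesis unfolding e y_def ar by simp
  qed
  ultimately show ?thesis using MQ by simp
qed

lemma laplace_pow:
  fixes s :: real and k :: nat
  assumes s: "s > 0"
  shows "(\<integral>\<^sup>+x. ennreal (indicator {0<..} x * (x ^ k * exp (- s * x))) \<partial>lborel) = ennreal (fact k / s ^ (k + 1))"
proof -
  have G: "(\<integral>\<^sup>+x. ennreal (indicator {0<..} x * (x ^ k * exp (- x))) \<partial>lborel) = ennreal (fact k)"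
  proof -
    have "ennreal (Gamma (real k + 1)) = (\<integral>\<^sup>+t. ennreal (indicator {0..} t * t powr (real k + 1 - 1) / exp t) \<partial>lborel)"
      using Gamma_conv_nn_integral_real[of "real k + 1"] by simp
    also have "\<dots> = (\<integral>\<^sup>+x. ennreal (indicator {0<..} x * (x ^ k * exp (- x))) \<partial>lborel)"
      by (rule nn_integral_cong_AE, rule eventually_mono[OF AE_lborel_singleton[of 0]])
         (auto simp: indicator_def powr_realpow exp_minus divide_inverse)
    moreover have "Gamma (1 + real k) = fact k" by (rule Gamma_fact)
    ultimately show ?thesis by (simp add: add.commute)
  qed
  have "(\<integral>\<^sup>+x. ennreal (indicator {0<..} x * (x ^ k * exp (- s * x))) \<partial>lborel)
      = ennreal \<bar>1/s\<bar> * (\<integral>\<^sup>+x. ennreal (indicator {0<..} (0 + 1/s * x) * ((0 + 1/s * x) ^ k * exp (- s * (0 + 1/s * x)))) \<partial>lborel)"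
    using s by (subst nn_integral_real_affine[of _ "1/s" 0]) auto
  also have "\<dots> = ennreal (1/s) * (\<integral>\<^sup>+x. ennreal (1 / s ^ k) * ennreal (indicator {0<..} x * (x ^ k * exp (- x))) \<partial>lborel)"
  proof -
    have "ennreal (indicator {0<..} (0 + 1/s * x) * ((0 + 1/s * x) ^ k * exp (- s * (0 + 1/s * x))))
        = ennreal (1 / s ^ k) * ennreal (indicator {0<..} x * (x ^ k * exp (- x)))" for x
    proof (cases "x > 0")
      case True
      thus ?thesis using s by (simp add: ennreal_mult[symmetric] power_divide field_simps)
    next
      case False
      hence "\<not> 0 < x / s" using s by (simp add: zero_less_divide_iff)
      thus ?thesis using s False by (simp add: indicator_def)
    qed
    thus ?thesis using s by simp
  qed
  also have "\<dots> = ennreal (1/s) * (ennreal (1 / s ^ k) * ennreal (fact k))"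
    by (subst nn_integral_cmult) (simp_all add: G)
  also have "\<dots> = ennreal (fact k / s ^ (k + 1))"
    using s by (simp add: ennreal_mult[symmetric] field_simps)
  finally show ?thesis .
qed

lemma outer:
  fixes a m b p :: real
  assumes a: "a \<noteq> 0" and m: "m > 0" and b: "b > 0" and p: "p > 0"
  shows "(\<lambda>k. upper_gamma (real k + m) (b\<^sup>2 / 2) / Gamma (real k + m) * (a\<^sup>2 / 2) ^ k / (p + a\<^sup>2 / 2) ^ (k + 1))
           sums (LBINT x:{0<..}. marcum_Q m (a * sqrt x) b * exp (- p * x))"
proof -
  define c where "c = a\<^sup>2 / 2"
  define s where "s = p + c"
  define U where "U k = upper_gamma (real k + m) (b\<^sup>2 / 2) / Gamma (real k + m)" for k :: nat
  have c: "c > 0" using a by (simp add: c_def)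
  have s: "s > 0" using c p by (simp add: s_def)
  have Gp: "Gamma (real k + m) > 0" for k using m by (intro Gamma_real_pos) auto
  have U01: "0 \<le> U k" "U k \<le> 1" for k
    using upper_gamma_bounds[of "real k + m" "b\<^sup>2 / 2"] m b Gp[of k] by (auto simp: U_def)
  define co where "co k = U k * c ^ k / fact k" for k :: nat
  have co0: "co k \<ge> 0" for k using U01 c by (simp add: co_def)
  define G where "G x = (\<Sum>k. co k * (x ^ k * exp (- s * x)))" for x :: real
  have sG: "(\<lambda>k. co k * (x ^ k * exp (- s * x))) sums (marcum_Q m (a * sqrt x) b * exp (- p * x))" if x: "x > 0" for x
  proof -
    have "a * sqrt x \<noteq> 0" using a x by simp
    from sums_mult2[OF marcum_series[OF this m b], of "exp (- p * x)"]
    have "(\<lambda>k. exp (- (a * sqrt x)\<^sup>2 / 2) * ((a * sqrt x)\<^sup>2 / 2) ^ k / fact k * U k * exp (- p * x))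
          sums (marcum_Q m (a * sqrt x) b * exp (- p * x))" by (simp add: U_def)
    moreover have "exp (- (a * sqrt x)\<^sup>2 / 2) * ((a * sqrt x)\<^sup>2 / 2) ^ k / fact k * U k * exp (- p * x)
                 = co k * (x ^ k * exp (- s * x))" for k
    proof -
      have sq: "(a * sqrt x)\<^sup>2 / 2 = c * x" using x by (simp add: c_def power_mult_distrib)
      have "exp (- (c * x)) * exp (- p * x) = exp (- s * x)"
        by (simp add: exp_add[symmetric] s_def algebra_simps)
      hence "exp (- (c * x)) * (c * x) ^ k / fact k * U k * exp (- p * x) = co k * (x ^ k * exp (- s * x))"
        unfolding co_def by (simp add: power_mult_distrib field_simps)
      thus ?thesis using sq by (simp add: minus_divide_left)
    qed
    ultimately show ?thesis by simp
  qed
  have eqG: "\<forall>x\<in>{0<..}. marcum_Q m (a * sqrt x) b * exp (- p * x) = G x"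
    using sG by (auto simp: G_def sums_iff)
  have Gm: "G \<in> borel_measurable borel" unfolding G_def by measurable
  have G0: "0 \<le> G x" if "x \<in> {0<..}" for x
  proof -
    have "x > 0" using that by simp
    from sums_summable[OF sG[OF this]] show ?thesis
      unfolding G_def using co0 \<open>x > 0\<close> by (intro suminf_nonneg) (auto intro!: mult_nonneg_nonneg)
  qed
  have pt: "ennreal (indicator {0<..} x * G x) = (\<Sum>k. ennreal (co k) * ennreal (indicator {0<..} x * (x ^ k * exp (- s * x))))" for x
  proof (cases "x > 0")
    case True
    have "(\<Sum>k. ennreal (co k * (x ^ k * exp (- s * x)))) = ennreal (G x)"
      by (rule suminf_ennreal_eq) (use sG[OF True] eqG True co0 in \<open>auto intro!: mult_nonneg_nonneg\<close>)
    thus ?thesis using True co0 by (simp add: ennreal_mult[symmetric])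
  qed simp
  have "(\<integral>\<^sup>+x. ennreal (indicator {0<..} x * G x) \<partial>lborel) = (\<Sum>k. \<integral>\<^sup>+x. ennreal (co k) * ennreal (indicator {0<..} x * (x ^ k * exp (- s * x))) \<partial>lborel)"
    unfolding pt by (rule nn_integral_suminf) simp
  also have "\<dots> = (\<Sum>k. ennreal (U k * c ^ k / s ^ (k + 1)))"
  proof (rule suminf_cong)
    fix k
    have "(\<integral>\<^sup>+x. ennreal (co k) * ennreal (indicator {0<..} x * (x ^ k * exp (- s * x))) \<partial>lborel) = ennreal (co k) * ennreal (fact k / s ^ (k + 1))"
      using laplace_pow[OF s, of k] by (subst nn_integral_cmult) simp_all
    also have "\<dots> = ennreal (U k * c ^ k / s ^ (k + 1))"
      using co0[of k] s by (simp add: ennreal_mult[symmetric] co_def)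
    finally show "(\<integral>\<^sup>+x. ennreal (co k) * ennreal (indicator {0<..} x * (x ^ k * exp (- s * x))) \<partial>lborel) = ennreal (U k * c ^ k / s ^ (k + 1))" .
  qed
  finally have NN: "(\<integral>\<^sup>+x. ennreal (indicator {0<..} x * G x) \<partial>lborel) = (\<Sum>k. ennreal (U k * c ^ k / s ^ (k + 1)))" .
  have q1: "c / s < 1" using c p s by (simp add: s_def)
  have sm: "summable (\<lambda>k. U k * c ^ k / s ^ (k + 1))"
  proof (rule summable_comparison_test'[of "\<lambda>k. (1/s) * (c/s) ^ k" 0])
    show "summable (\<lambda>k. (1/s) * (c/s) ^ k)"
      by (rule summable_mult, rule summable_geometric) (use c s q1 in simp)
    fix k :: nat
    have "U k * c ^ k / s ^ (k + 1) \<le> 1 * c ^ k / s ^ (k + 1)"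
      using U01 c s by (intro divide_right_mono mult_right_mono) auto
    also have "\<dots> = (1/s) * (c/s) ^ k" by (simp add: power_divide)
    finally show "norm (U k * c ^ k / s ^ (k + 1)) \<le> (1/s) * (c/s) ^ k"
      using U01[of k] c s by simp
  qed
  have "(LBINT x:{0<..}. marcum_Q m (a * sqrt x) b * exp (- p * x)) = (LBINT x:{0<..}. G x)"
    by (rule set_lebesgue_integral_cong) (use eqG in auto)
  also have "\<dots> = (\<Sum>k. U k * c ^ k / s ^ (k + 1))"
  proof -
    have nn: "\<And>k. 0 \<le> U k * c ^ k / s ^ (k + 1)" using U01 c s by simp
    have E: "(\<Sum>k. ennreal (U k * c ^ k / s ^ (k + 1))) = ennreal (\<Sum>k. U k * c ^ k / s ^ (k + 1))"
      by (rule suminf_ennreal2[OF nn sm])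
    show ?thesis
      by (subst set_integral_nn[OF Gm _ G0]) (simp_all only: NN E enn2real_ennreal suminf_nonneg[OF sm nn] sets_lborel atLeast_borel greaterThan_borel)
  qed
  finally have "(LBINT x:{0<..}. marcum_Q m (a * sqrt x) b * exp (- p * x)) = (\<Sum>k. U k * c ^ k / s ^ (k + 1))" .
  thus ?thesis using sm summable_sums unfolding U_def c_def s_def by (simp add: mult_ac)
qed

lemma cauchy_T:
  fixes a :: "nat \<Rightarrow> real" and q :: real
  assumes a0: "\<And>j. a j \<ge> 0" and sa: "summable a" and q: "0 \<le> q" "q < 1"
  shows "(\<lambda>k. q ^ k * (\<Sum>j<k. a j)) sums (q / (1 - q) * (\<Sum>i. a i * q ^ i))"
proof -
  define b where "b i = a i * q ^ (i + 1)" for i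
  define d where "d i = q ^ i" for i :: nat
  have qi: "q ^ i \<le> 1" for i :: nat using q by (simp add: power_le_one)
  have sai: "summable (\<lambda>i. a i * q ^ i)"
    by (rule summable_comparison_test'[OF sa, of 0]) (use a0 q qi in \<open>auto intro: mult_left_le\<close>)
  have sb: "summable (\<lambda>i. norm (b i))"
    by (rule summable_comparison_test'[OF sa, of 0])
       (use a0 q qi in \<open>auto simp: b_def abs_mult intro: mult_left_le simp del: power_Suc\<close>)
  have sd: "summable (\<lambda>i. norm (d i))" using q by (simp add: d_def summable_geometric)
  have "(\<lambda>k. \<Sum>i\<le>k. b i * d (k - i)) sums ((\<Sum>k. b k) * (\<Sum>k. d k))"
    by (rule Cauchy_product_sums[OF sb sd])
  moreover have "(\<Sum>i\<le>k. b i * d (k - i)) = q ^ Suc k * (\<Sum>j<Suc k. a j)" for k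
  proof -
    have "(\<Sum>i\<le>k. b i * d (k - i)) = (\<Sum>i\<le>k. q ^ Suc k * a i)"
    proof (rule sum.cong)
      fix i assume "i \<in> {..k}"
      hence "i + 1 + (k - i) = Suc k" by simp
      hence "q ^ (i + 1) * q ^ (k - i) = q ^ Suc k" by (metis power_add)
      moreover have "b i * d (k - i) = a i * (q ^ (i + 1) * q ^ (k - i))" by (simp only: b_def d_def mult.assoc)
      ultimately show "b i * d (k - i) = q ^ Suc k * a i" by (simp only: mult.commute)
    qed simp
    also have "\<dots> = q ^ Suc k * (\<Sum>j<Suc k. a j)" by (simp add: sum_distrib_left lessThan_Suc_atMost)
    finally show ?thesis .
  qed
  moreover have "(\<Sum>k. d k) = 1 / (1 - q)" using q by (simp add: d_def suminf_geometric)
  moreover have "(\<Sum>k. b k) = q * (\<Sum>i. a i * q ^ i)"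
    unfolding b_def using suminf_mult[OF sai, of q] by (simp add: mult_ac)
  ultimately have "(\<lambda>k. q ^ Suc k * (\<Sum>j<Suc k. a j)) sums (q * (\<Sum>i. a i * q ^ i) * (1 / (1 - q)))" by simp
  hence "(\<lambda>k. q ^ k * (\<Sum>j<k. a j)) sums (q * (\<Sum>i. a i * q ^ i) * (1 / (1 - q)) + q ^ 0 * (\<Sum>j<0. a j))"
    by (subst sums_Suc_iff[symmetric]) simp
  thus ?thesis by simp
qed

lemma coef_identity:
  fixes a p b m D :: real
  assumes a: "a \<noteq> 0" and p: "p > 0" and D: "D = a\<^sup>2 + 2 * p"
  shows "a\<^sup>2 * exp (- p * b\<^sup>2 / D) * exp (- (a\<^sup>2 / D * (b\<^sup>2 / 2))) * (a\<^sup>2 / D) powr m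
           / (p * (a\<^sup>2) powr m * D powr (1 - m))
       = exp (- (b\<^sup>2 / 2)) / (D / 2) * (a\<^sup>2 / D) / (1 - a\<^sup>2 / D)"
proof -
  have a2: "a\<^sup>2 > 0" using a by simp
  have Dp: "D > 0" using a2 p D by linarith
  have e: "exp (- p * b\<^sup>2 / D) * exp (- (a\<^sup>2 / D * (b\<^sup>2 / 2))) = exp (- (b\<^sup>2 / 2))"
  proof -
    have n: "2 * p * b\<^sup>2 + a\<^sup>2 * b\<^sup>2 = b\<^sup>2 * D" by (simp add: D algebra_simps)
    have "- p * b\<^sup>2 / D + - (a\<^sup>2 / D * (b\<^sup>2 / 2)) = - (2 * p * b\<^sup>2 + a\<^sup>2 * b\<^sup>2) / (2 * D)"
      using Dp by (simp add: field_simps)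
    also have "\<dots> = - (b\<^sup>2 / 2)" unfolding n using Dp by simp
    finally have "- p * b\<^sup>2 / D + - (a\<^sup>2 / D * (b\<^sup>2 / 2)) = - (b\<^sup>2 / 2)" .
    thus ?thesis by (simp add: exp_add[symmetric])
  qed
  have pw: "(a\<^sup>2 / D) powr m = (a\<^sup>2) powr m / D powr m" using a2 Dp by (simp add: powr_divide)
  have pD: "D powr m * D powr (1 - m) = D" using Dp by (simp add: powr_add[symmetric])
  have q1: "1 - a\<^sup>2 / D = 2 * p / D" using Dp D by (simp add: field_simps)
  have ap: "(a\<^sup>2) powr m > 0" using a2 by simp
  have "a\<^sup>2 * exp (- p * b\<^sup>2 / D) * exp (- (a\<^sup>2 / D * (b\<^sup>2 / 2))) * (a\<^sup>2 / D) powr m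
           / (p * (a\<^sup>2) powr m * D powr (1 - m))
        = a\<^sup>2 * exp (- (b\<^sup>2 / 2)) * (a\<^sup>2) powr m / ((p * (a\<^sup>2) powr m) * (D powr m * D powr (1 - m)))"
    unfolding pw e[symmetric] by (simp add: field_simps)
  also have "\<dots> = a\<^sup>2 * exp (- (b\<^sup>2 / 2)) / (p * D)" unfolding pD using ap p Dp by (simp add: field_simps)
  also have "\<dots> = exp (- (b\<^sup>2 / 2)) / (D / 2) * (a\<^sup>2 / D) / (1 - a\<^sup>2 / D)"
    unfolding q1 using p Dp by (simp add: field_simps)
  finally show ?thesis .
qed

lemma series_identity:
  fixes a m b p :: real
  assumes a: "a \<noteq> 0" and m: "m > 0" and b: "b > 0" and p: "p > 0"
  shows "(\<lambda>k. upper_gamma (real k + m) (b\<^sup>2 / 2) / Gamma (real k + m) * (a\<^sup>2 / 2) ^ k / (p + a\<^sup>2 / 2) ^ (k + 1))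
    sums (upper_gamma m (b\<^sup>2 / 2) / (p * Gamma m) +
    a\<^sup>2 * exp (- p * b\<^sup>2 / (a\<^sup>2 + 2 * p)) * lower_gamma m (a\<^sup>2 * b\<^sup>2 / (2 * a\<^sup>2 + 4 * p))
      / (p * (a\<^sup>2) powr m * Gamma m * (a\<^sup>2 + 2 * p) powr (1 - m)))"
proof -
  define c where "c = a\<^sup>2 / 2"
  define s where "s = p + c"
  define q where "q = c / s"
  define y where "y = b\<^sup>2 / 2"
  define D where "D = a\<^sup>2 + 2 * p"
  have c: "c > 0" using a by (simp add: c_def)
  have s: "s > 0" using c p by (simp add: s_def)
  have q: "0 < q" "q < 1" using c s p by (simp_all add: q_def s_def)
  have y: "y > 0" using b by (simp add: y_def)
  have qD: "q = a\<^sup>2 / D" by (simp add: q_def c_def s_def D_def field_simps)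
  have sD: "s = D / 2" by (simp add: s_def c_def D_def)
  have Gp: "Gamma (real k + m) > 0" for k using m by (intro Gamma_real_pos) auto
  have Gm: "Gamma m > 0" using m by (rule Gamma_real_pos)
  define A where "A j = y powr (m + real j) / Gamma (m + real j + 1)" for j :: nat
  have A0: "A j \<ge> 0" for j using m by (simp add: A_def Gamma_real_pos less_imp_le)
  have tail: "(\<lambda>n. A (n + k)) sums (lower_gamma (real k + m) y / (exp (- y) * Gamma (real k + m)))" for k
  proof -
    have "(\<lambda>n. exp (- y) * Gamma (real k + m) * y powr (real k + m + real n) / Gamma (real k + m + real n + 1))
            sums lower_gamma (real k + m) y"
      by (rule lower_gamma_sums(1)) (use m y in simp_all)
    from sums_divide[OF this, of "exp (- y) * Gamma (real k + m)"]
    show ?thesis using Gp[of k] by (simp add: A_def add_ac)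
  qed
  have sA: "summable A" using tail[of 0] by (simp add: sums_iff)
  define U0 where "U0 = 1 - exp (- y) * suminf A"
  define U where "U k = upper_gamma (real k + m) y / Gamma (real k + m)" for k :: nat
  have Uk: "U k = U0 + exp (- y) * (\<Sum>j<k. A j)" for k
  proof -
    have G: "Gamma (real k + m) > 0" by (rule Gp)
    have e1: "exp (- y) * (\<Sum>n. A (n + k)) = lower_gamma (real k + m) y / Gamma (real k + m)"
      unfolding sums_unique[OF tail[of k], symmetric] using G by (simp add: field_simps)
    have "U k = (Gamma (real k + m) - lower_gamma (real k + m) y) / Gamma (real k + m)"
      using upper_gamma_eq(2)[of "real k + m" y] m y by (simp add: U_def)
    also have "\<dots> = 1 - lower_gamma (real k + m) y / Gamma (real k + m)"
      using G by (simp add: diff_divide_distrib)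
    finally have "U k = 1 - exp (- y) * (\<Sum>n. A (n + k))" using e1 by simp
    also have "(\<Sum>n. A (n + k)) = suminf A - (\<Sum>j<k. A j)"
      using suminf_split_initial_segment[OF sA, of k] by simp
    finally show ?thesis by (simp add: U0_def algebra_simps)
  qed
  have U0': "U 0 = U0" using Uk[of 0] by simp
  define W where "W = (\<Sum>i. A i * q ^ i)"
  have term_eq: "upper_gamma (real k + m) (b\<^sup>2 / 2) / Gamma (real k + m) * (a\<^sup>2 / 2) ^ k / (p + a\<^sup>2 / 2) ^ (k + 1)
        = U0 / s * q ^ k + exp (- y) / s * (q ^ k * (\<Sum>j<k. A j))" for k
  proof -
    have "upper_gamma (real k + m) (b\<^sup>2 / 2) / Gamma (real k + m) * (a\<^sup>2 / 2) ^ k / (p + a\<^sup>2 / 2) ^ (k + 1)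
          = U k * (q ^ k / s)"
      using s by (simp add: U_def y_def c_def[symmetric] s_def[symmetric] q_def power_divide)
    thus ?thesis by (simp add: Uk algebra_simps)
  qed
  have S: "(\<lambda>k. U0 / s * q ^ k + exp (- y) / s * (q ^ k * (\<Sum>j<k. A j))) sums
             (U0 / s * (1 / (1 - q)) + exp (- y) / s * (q / (1 - q) * W))"
    unfolding W_def
    by (intro sums_add sums_mult geometric_sums cauchy_T) (use q A0 sA in auto)
  have R1: "upper_gamma m (b\<^sup>2 / 2) / (p * Gamma m) = U0 / s * (1 / (1 - q))"
  proof -
    have "s * (1 - q) = s - c" using s by (simp add: q_def right_diff_distrib)
    hence "s * (1 - q) = p" by (simp add: s_def)
    hence "U0 / s * (1 / (1 - q)) = U0 / p" by (simp add: divide_divide_eq_left)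
    moreover have "upper_gamma m (b\<^sup>2 / 2) / (p * Gamma m) = U 0 / p"
      by (simp add: U_def y_def divide_divide_eq_left mult.commute)
    ultimately show ?thesis using U0' by (simp only:)
  qed
  have qy: "a\<^sup>2 * b\<^sup>2 / (2 * a\<^sup>2 + 4 * p) = q * y"
    by (simp add: qD D_def y_def field_simps)
  have low: "lower_gamma m (q * y) = exp (- (q * y)) * Gamma m * q powr m * W"
  proof -
    have qy0: "q * y > 0" using q y by simp
    have "(\<lambda>n. exp (- (q * y)) * Gamma m * (q * y) powr (m + real n) / Gamma (m + real n + 1)) sums lower_gamma m (q * y)"
      by (rule lower_gamma_sums(1)[OF m qy0])
    moreover have "exp (- (q * y)) * Gamma m * (q * y) powr (m + real n) / Gamma (m + real n + 1)
        = exp (- (q * y)) * Gamma m * q powr m * (A n * q ^ n)" for n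
    proof -
      have "(q * y) powr (m + real n) = q powr m * q ^ n * y powr (m + real n)"
        using q y by (simp add: powr_mult powr_add powr_realpow)
      thus ?thesis by (simp add: A_def)
    qed
    ultimately have "(\<lambda>n. exp (- (q * y)) * Gamma m * q powr m * (A n * q ^ n)) sums lower_gamma m (q * y)" by simp
    moreover have "summable (\<lambda>n. A n * q ^ n)"
      by (rule summable_comparison_test'[OF sA, of 0]) (use A0 q in \<open>auto intro: mult_left_le simp: power_le_one\<close>)
    hence "(\<lambda>n. exp (- (q * y)) * Gamma m * q powr m * (A n * q ^ n)) sums (exp (- (q * y)) * Gamma m * q powr m * W)"
      unfolding W_def by (intro sums_mult summable_sums)
    ultimately show ?thesis using sums_unique2 by blast
  qed
  have R2: "a\<^sup>2 * exp (- p * b\<^sup>2 / (a\<^sup>2 + 2 * p)) * lower_gamma m (a\<^sup>2 * b\<^sup>2 / (2 * a\<^sup>2 + 4 * p))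
      / (p * (a\<^sup>2) powr m * Gamma m * (a\<^sup>2 + 2 * p) powr (1 - m)) = exp (- y) / s * (q / (1 - q) * W)"
  proof -
    have "a\<^sup>2 * exp (- p * b\<^sup>2 / D) * exp (- (a\<^sup>2 / D * (b\<^sup>2 / 2))) * (a\<^sup>2 / D) powr m
           / (p * (a\<^sup>2) powr m * D powr (1 - m))
       = exp (- (b\<^sup>2 / 2)) / (D / 2) * (a\<^sup>2 / D) / (1 - a\<^sup>2 / D)"
      by (rule coef_identity[OF a p D_def])
    hence co: "a\<^sup>2 * exp (- p * b\<^sup>2 / D) * exp (- (q * y)) * q powr m
           / (p * (a\<^sup>2) powr m * D powr (1 - m)) = exp (- y) / s * q / (1 - q)"
      by (simp only: qD[symmetric] sD[symmetric] y_def)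
    have "a\<^sup>2 * exp (- p * b\<^sup>2 / (a\<^sup>2 + 2 * p)) * lower_gamma m (a\<^sup>2 * b\<^sup>2 / (2 * a\<^sup>2 + 4 * p))
      / (p * (a\<^sup>2) powr m * Gamma m * (a\<^sup>2 + 2 * p) powr (1 - m))
      = (a\<^sup>2 * exp (- p * b\<^sup>2 / D) * exp (- (q * y)) * q powr m
           / (p * (a\<^sup>2) powr m * D powr (1 - m))) * W"
      unfolding qy low D_def[symmetric] using Gm by (simp add: field_simps)
    thus ?thesis unfolding co by simp
  qed
  show ?thesis
    unfolding R1 R2 using S term_eq by (simp add: y_def)
qed

theorem lemma1:
  fixes a m b p :: real
  assumes "a \<noteq> 0" and "m > 0" and "b > 0" and "p > 0"
  shows "(LBINT x:{0<..}. marcum_Q m (a * sqrt x) b * exp (- p * x)) =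
    upper_gamma m (b\<^sup>2 / 2) / (p * Gamma m) +
    a\<^sup>2 * exp (- p * b\<^sup>2 / (a\<^sup>2 + 2 * p)) * lower_gamma m (a\<^sup>2 * b\<^sup>2 / (2 * a\<^sup>2 + 4 * p))
      / (p * (a\<^sup>2) powr m * Gamma m * (a\<^sup>2 + 2 * p) powr (1 - m))"
  using sums_unique2[OF outer[OF assms] series_identity[OF assms]] .

end
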